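(* Let $F$ be the elementary cellular automaton with rule number 172. For every nonempty finite word $u\in\{0,1\}^*$, the deterministic communication complexity of $\textsc{SInv}_{F,u}$ restricted to inputs of length $n$ is bounded by a constant independent of $n$.
   Context: An elementary cellular automaton (ECA) with rule number $N\in\{0,\dots,255\}$ is the map $F:\{0,1\}^{\mathbb Z}\to\{0,1\}^{\mathbb Z}$ given by $F(x)_i=f(x_{i-1},x_i,x_{i+1})$. Here the local rule $f:\{0,1\}^3\to\{0,1\}$ is determined by $N=\sum_{a,b,c\in\{0,1\}}2^{4a+2b+c}f(a,b,c)$. For a nonempty finite word $u$, $p_u\in\{0,1\}^{\mathbb Z}$ is defined by $(p_u)_i=u_{i\bmod |u|}$. For a finite word $x$, $p_u[x]$ is the configuration equal to $x$ on positions $0,\dots,|x|-1$ and to $p_u$ elsewhere. $\textsc{SInv}_{F,u}$ is the decision problem: on input a finite word $x$, decide whether there is an integer $w$ such that for all $t\ge0$ the set of positions where $F^t(p_u)$ and $F^t(p_u[x])$ differ is contained in an interval of length $w$. For each $n$, it is regarded as a function $\{0,1\}^n\to\{0,1\}$. For a function $g:X\times Y\to Z$, $D(g)$ is the minimal depth of a deterministic two-party protocol computing $g$. In such a protocol, Alice knows $x$ and Bob knows $y$. The protocol is a binary tree: each internal node is labelled by a function of Alice's input only or of Bob's input only, with values in $\{\text{left},\text{right}\}$, and each leaf is labelled by an output value. For $g:\{0,1\}^m\to Z$, set $D(g)=\max_{0\le i<m}D(g_i)$, where $g_i:\{0,1\}^i\times\{0,1\}^{m-i}\to Z$ is $g_i(x,y)=g(xy)$.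 *)

theory Defs
  imports Main
begin

type_synonym config = "int \<Rightarrow> bool"

definition eca_local :: "nat \<Rightarrow> bool \<Rightarrow> bool \<Rightarrow> bool \<Rightarrow> bool" where
  "eca_local N a b c = bit N (4 * of_bool a + 2 * of_bool b + of_bool c)"

definition eca :: "nat \<Rightarrow> config \<Rightarrow> config" where
  "eca N x = (\<lambda>i. eca_local N (x (i - 1)) (x i) (x (i + 1)))"

definition per :: "bool list \<Rightarrow> config" where
  "per u = (\<lambda>i. u ! nat (i mod int (length u)))"

definition patch :: "bool list \<Rightarrow> bool list \<Rightarrow> config" where
  "patch u x = (\<lambda>i. if 0 \<le> i \<and> i < int (length x) then x ! nat i else per u i)"

definition SInv :: "nat \<Rightarrow> bool list \<Rightarrow> bool list \<Rightarrow> bool" where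
  "SInv N u x = (\<exists>w::int. \<forall>t::nat. \<exists>a::int.
      {i. ((eca N) ^^ t) (per u) i \<noteq> ((eca N) ^^ t) (patch u x) i} \<subseteq> {a..<a + w})"

datatype ('x, 'y, 'z) protocol =
    Leaf 'z
  | Alice "'x \<Rightarrow> bool" "('x, 'y, 'z) protocol" "('x, 'y, 'z) protocol"
  | Bob "'y \<Rightarrow> bool" "('x, 'y, 'z) protocol" "('x, 'y, 'z) protocol"

fun run :: "('x, 'y, 'z) protocol \<Rightarrow> 'x \<Rightarrow> 'y \<Rightarrow> 'z" where
  "run (Leaf z) x y = z"
| "run (Alice f l r) x y = (if f x then run l x y else run r x y)"
| "run (Bob f l r) x y = (if f y then run l x y else run r x y)"

fun depth :: "('x, 'y, 'z) protocol \<Rightarrow> nat" where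
  "depth (Leaf z) = 0"
| "depth (Alice f l r) = Suc (max (depth l) (depth r))"
| "depth (Bob f l r) = Suc (max (depth l) (depth r))"

definition D_split :: "(bool list \<Rightarrow> 'z) \<Rightarrow> nat \<Rightarrow> nat \<Rightarrow> nat" where
  "D_split g m i = (LEAST d. \<exists>P :: (bool list, bool list, 'z) protocol. depth P = d \<and>
      (\<forall>x y. length x = i \<longrightarrow> length y = m - i \<longrightarrow> run P x y = g (x @ y)))"

definition D_cc :: "(bool list \<Rightarrow> 'z) \<Rightarrow> nat \<Rightarrow> nat" where
  "D_cc g m = Max (insert 0 (D_split g m ` {..<m}))"

end

theory Submission
  imports Defs
begin
lemma F172: "eca 172 x i = (if x (i - 1) then x (i + 1) else x i)"
  unfolding eca_def eca_local_def by (cases "x (i - 1)"; cases "x i"; cases "x (i+1)"; simp add: bit_0)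

abbreviation F where "F \<equiv> eca 172"

definition wall :: "config \<Rightarrow> int \<Rightarrow> bool" where
  "wall z c \<longleftrightarrow> \<not> z c \<and> \<not> z (c+1)"

definition nz :: "config \<Rightarrow> bool" where
  "nz z \<longleftrightarrow> (\<forall>i. z i \<or> z (i+1))"

lemma wall_F: "wall z c \<Longrightarrow> wall (F z) c"
  unfolding wall_def F172 by auto

lemma wall_Ft: "wall z c \<Longrightarrow> wall ((F ^^ t) z) c"
  by (induction t) (auto intro: wall_F)

lemma nz_F: "nz z \<Longrightarrow> nz (F z)"
  unfolding nz_def F172
proof (intro allI)
  fix i assume h: "\<forall>i. z i \<or> z (i+1)"
  show "(if z (i - 1) then z (i + 1) else z i) \<or> (if z (i + 1 - 1) then z (i + 1 + 1) else z (i + 1))"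
    using h[rule_format, of "i-1"] h[rule_format, of "i"] h[rule_format, of "i+1"] by auto
qed

lemma nz_Ft: "nz z \<Longrightarrow> nz ((F ^^ t) z)"
  by (induction t) (auto intro: nz_F)

definition good :: "config \<Rightarrow> bool" where
  "good z \<longleftrightarrow> (\<forall>i. z i \<or> (z (i+1) \<and> z (i+2)))"

lemma good_F: "nz z \<Longrightarrow> good (F z)"
  unfolding nz_def good_def F172
proof (intro allI)
  fix i assume h: "\<forall>i. z i \<or> z (i+1)"
  show "(if z (i - 1) then z (i + 1) else z i) \<or>
         (if z (i + 1 - 1) then z (i + 1 + 1) else z (i + 1)) \<and>
         (if z (i + 2 - 1) then z (i + 2 + 1) else z (i + 2))"
    using h[rule_format, of "i-1"] h[rule_format, of "i"] h[rule_format, of "i+1"] h[rule_format, of "i+2"]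
    by (auto simp: algebra_simps)
qed

lemma good_shift: "good z \<Longrightarrow> F z = (\<lambda>i. z (i+1))"
  unfolding good_def F172
proof
  fix i assume h: "\<forall>i. z i \<or> z (i+1) \<and> z (i+2)"
  show "(if z (i - 1) then z (i + 1) else z i) = z (i + 1)"
    using h[rule_format, of "i-1"] by (auto simp: add.commute)
qed

lemma good_shift_good: "good z \<Longrightarrow> good (\<lambda>i. z (i+1))"
  unfolding good_def by (auto simp: algebra_simps)

lemma good_Ft: "good z \<Longrightarrow> (F ^^ t) z = (\<lambda>i. z (i + int t))"
proof (induction t arbitrary: z)
  case 0 then show ?case by simp
next
  case (Suc t)
  have "(F ^^ Suc t) z = (F ^^ t) (F z)" by (simp add: funpow_Suc_right del: funpow.simps)
  also have "\<dots> = (F ^^ t) (\<lambda>i. z (i+1))" using good_shift[OF Suc.prems] by simp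
  also have "\<dots> = (\<lambda>i. z (i + 1 + int t))" using Suc.IH[OF good_shift_good[OF Suc.prems]]
    by (simp add: ac_simps)
  finally show ?case by (simp add: ac_simps)
qed

lemma lc_left: "(\<forall>j<b. z j = z' j) \<Longrightarrow> (\<forall>j<b - int t. (F ^^ t) z j = (F ^^ t) z' j)"
proof (induction t)
  case 0 then show ?case by simp
next
  case (Suc t)
  then have h: "\<forall>j<b - int t. (F ^^ t) z j = (F ^^ t) z' j" by simp
  show ?case
  proof (intro allI impI)
    fix j assume "j < b - int (Suc t)"
    then show "(F ^^ Suc t) z j = (F ^^ Suc t) z' j"
      using h[rule_format, of "j-1"] h[rule_format, of "j"] h[rule_format, of "j+1"]
      by (simp add: F172)
  qed
qed

lemma lc_right: "(\<forall>j\<ge>b. z j = z' j) \<Longrightarrow> (\<forall>j\<ge>b + int t. (F ^^ t) z j = (F ^^ t) z' j)"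
proof (induction t)
  case 0 then show ?case by simp
next
  case (Suc t)
  then have h: "\<forall>j\<ge>b + int t. (F ^^ t) z j = (F ^^ t) z' j" by simp
  show ?case
  proof (intro allI impI)
    fix j assume "j \<ge> b + int (Suc t)"
    then show "(F ^^ Suc t) z j = (F ^^ Suc t) z' j"
      using h[rule_format, of "j-1"] h[rule_format, of "j"] h[rule_format, of "j+1"]
      by (simp add: F172)
  qed
qed

lemma wall_sep_right: "wall z c \<Longrightarrow> wall z' c \<Longrightarrow> (\<forall>j\<ge>c. z j = z' j) \<Longrightarrow> (\<forall>j\<ge>c. (F ^^ t) z j = (F ^^ t) z' j)"
proof (induction t)
  case 0 then show ?case by simp
next
  case (Suc t)
  then have h: "\<forall>j\<ge>c. (F ^^ t) z j = (F ^^ t) z' j" by simp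
  have w1: "wall ((F ^^ Suc t) z) c" "wall ((F ^^ Suc t) z') c" using Suc.prems wall_Ft by blast+
  show ?case
  proof (intro allI impI)
    fix j assume j: "j \<ge> c"
    show "(F ^^ Suc t) z j = (F ^^ Suc t) z' j"
    proof (cases "j \<ge> c + 2")
      case True then show ?thesis
        using h[rule_format, of "j-1"] h[rule_format, of "j"] h[rule_format, of "j+1"]
        by (simp add: F172)
    next
      case False then have "j = c \<or> j = c + 1" using j by auto
      then show ?thesis using w1 unfolding wall_def by auto
    qed
  qed
qed

lemma wall_sep_left: "wall z c \<Longrightarrow> wall z' c \<Longrightarrow> (\<forall>j\<le>c+1. z j = z' j) \<Longrightarrow> (\<forall>j\<le>c+1. (F ^^ t) z j = (F ^^ t) z' j)"
proof (induction t)
  case 0 then show ?case by simp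
next
  case (Suc t)
  then have h: "\<forall>j\<le>c+1. (F ^^ t) z j = (F ^^ t) z' j" by simp
  have w1: "wall ((F ^^ Suc t) z) c" "wall ((F ^^ Suc t) z') c" using Suc.prems wall_Ft by blast+
  show ?case
  proof (intro allI impI)
    fix j assume j: "j \<le> c + 1"
    show "(F ^^ Suc t) z j = (F ^^ Suc t) z' j"
    proof (cases "j \<le> c - 1")
      case True then show ?thesis
        using h[rule_format, of "j-1"] h[rule_format, of "j"] h[rule_format, of "j+1"]
        by (simp add: F172)
    next
      case False then have "j = c \<or> j = c + 1" using j by auto
      then show ?thesis using w1 unfolding wall_def by auto
    qed
  qed
qed

lemma wall_extend: "wall z c \<Longrightarrow> (\<forall>j<c. \<not> wall z j) \<Longrightarrow> \<exists>j<c. wall ((F ^^ 2) z) j"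
proof -
  assume w: "wall z c" and nw: "\<forall>j<c. \<not> wall z j"
  have a: "z (c-1)" using w nw[rule_format, of "c-1"] unfolding wall_def by auto
  show ?thesis
  proof (cases "z (c-2)")
    case True
    have "wall (F z) (c-1)" using w True unfolding wall_def F172 by auto
    then have "wall (F (F z)) (c-1)" by (rule wall_F)
    then show ?thesis by (intro exI[of _ "c-1"]) (simp add: numeral_2_eq_2)
  next
    case False
    have b: "z (c-3)" using False nw[rule_format, of "c-3"] unfolding wall_def by auto
    have "F z (c-2)" using a b by (simp add: F172)
    moreover have "F z (c-1)" using a False by (simp add: F172)
    moreover have wc: "wall (F z) c" using w by (rule wall_F)
    ultimately have "\<not> F (F z) (c-1)" using F172[of "F z" "c-1"] unfolding wall_def
      by (simp add: algebra_simps)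
    moreover have "\<not> F (F z) c" using wall_F[OF wc] unfolding wall_def by simp
    ultimately have "wall (F (F z)) (c-1)" unfolding wall_def by simp
    then show ?thesis by (intro exI[of _ "c-1"]) (simp add: numeral_2_eq_2)
  qed
qed

lemma patch_out: "j < 0 \<or> j \<ge> int (length x) \<Longrightarrow> patch u x j = per u j"
  unfolding patch_def by auto

lemma per_period: "u \<noteq> [] \<Longrightarrow> per u (j + int (length u) * k) = per u j"
  unfolding per_def by simp

lemma caseA:
  assumes u: "u \<noteq> []" and w: "wall (per u) c"
  shows "SInv 172 u x"
proof -
  define L where "L = int (length u)"
  define n where "n = int (length x)"
  have L1: "L \<ge> 1" using u unfolding L_def by (cases u) auto
  have wk: "wall (per u) (c + L * k)" for k
    using w per_period[OF u, of c k] per_period[OF u, of "c+1" k] unfolding wall_def L_def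
    by (simp add: ac_simps)
  define cL where "cL = c + L * (- (\<bar>c\<bar> + 2))"
  define cR where "cR = c + L * (\<bar>c\<bar> + n)"
  have m1: "L * (\<bar>c\<bar> + 2) \<ge> 1 * (\<bar>c\<bar> + 2)" by (rule mult_right_mono) (use L1 in auto)
  have n0: "n \<ge> 0" unfolding n_def by simp
  have m2: "L * (\<bar>c\<bar> + n) \<ge> 1 * (\<bar>c\<bar> + n)" by (rule mult_right_mono) (use L1 n0 in auto)
  have cL: "cL \<le> -2" unfolding cL_def mult_minus_right using m1[unfolded mult_1] abs_ge_self[of c] by linarith
  have cR: "cR \<ge> n" unfolding cR_def using m2[unfolded mult_1] abs_ge_minus_self[of c] by linarith
  have wL: "wall (per u) cL" "wall (per u) cR" unfolding cL_def cR_def by (rule wk)+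
  have wL': "wall (patch u x) cL" "wall (patch u x) cR"
    using wL cL cR patch_out[of "cL" x u] patch_out[of "cL+1" x u] patch_out[of "cR" x u]
      patch_out[of "cR+1" x u] unfolding wall_def n_def by auto
  have agL: "\<forall>j\<le>cL+1. per u j = patch u x j" using cL patch_out[of _ x u] by auto
  have agR: "\<forall>j\<ge>cR. per u j = patch u x j" using cR patch_out[of _ x u] unfolding n_def by auto
  show ?thesis unfolding SInv_def
  proof (intro exI allI)
    fix t
    have A: "\<forall>j\<le>cL+1. (F^^t) (per u) j = (F^^t) (patch u x) j"
      by (rule wall_sep_left[OF wL(1) wL'(1) agL])
    have B: "\<forall>j\<ge>cR. (F^^t) (per u) j = (F^^t) (patch u x) j"
      by (rule wall_sep_right[OF wL(2) wL'(2) agR])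
    show "{i. (F ^^ t) (per u) i \<noteq> (F ^^ t) (patch u x) i} \<subseteq> {cL + 2..<cL + 2 + (cR - cL)}"
    proof
      fix i assume "i \<in> {i. (F ^^ t) (per u) i \<noteq> (F ^^ t) (patch u x) i}"
      then have "\<not> i \<le> cL + 1" "\<not> i \<ge> cR" using A B by auto
      then show "i \<in> {cL + 2..<cL + 2 + (cR - cL)}" by auto
    qed
  qed
qed

lemma caseB1:
  assumes p: "nz (per u)" and q: "nz (patch u x)"
  shows "SInv 172 u x"
proof -
  define n where "n = int (length x)"
  have ag1: "\<forall>j<0. per u j = patch u x j" using patch_out[of _ x u] by auto
  have ag2: "\<forall>j\<ge>n. per u j = patch u x j" using patch_out[of _ x u] unfolding n_def by auto
  have A1: "\<forall>j<0 - int 1. (F^^1) (per u) j = (F^^1) (patch u x) j" by (rule lc_left[OF ag1])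
  have B1: "\<forall>j\<ge>n + int 1. (F^^1) (per u) j = (F^^1) (patch u x) j" by (rule lc_right[OF ag2])
  have gp: "good (F (per u))" and gq: "good (F (patch u x))" using p q by (auto intro: good_F)
  show ?thesis unfolding SInv_def
  proof (rule exI[of _ "n+2"], rule allI)
    fix t
    show "\<exists>a. {i. (F ^^ t) (per u) i \<noteq> (F ^^ t) (patch u x) i} \<subseteq> {a..<a + (n+2)}"
    proof (cases t)
      case 0
      have "{i. (F ^^ t) (per u) i \<noteq> (F ^^ t) (patch u x) i} \<subseteq> {0..<0 + (n+2)}"
      proof
        fix i assume "i \<in> {i. (F ^^ t) (per u) i \<noteq> (F ^^ t) (patch u x) i}"
        then have "per u i \<noteq> patch u x i" using 0 by simp
        then have "\<not> i < 0" "\<not> i \<ge> n" using ag1 ag2 by auto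
        then show "i \<in> {0..<0 + (n+2)}" by auto
      qed
      then show ?thesis by blast
    next
      case (Suc s)
      have e: "(F ^^ t) z = (\<lambda>i. F z (i + int s))" if "good (F z)" for z
        using good_Ft[OF that, of s] Suc by (simp add: funpow_Suc_right del: funpow.simps)
      have "{i. (F ^^ t) (per u) i \<noteq> (F ^^ t) (patch u x) i} \<subseteq> {-1 - int s..<-1 - int s + (n+2)}"
      proof
        fix i assume "i \<in> {i. (F ^^ t) (per u) i \<noteq> (F ^^ t) (patch u x) i}"
        then have "F (per u) (i + int s) \<noteq> F (patch u x) (i + int s)" using e gp gq by simp
        then have "\<not> i + int s < -1" "\<not> i + int s \<ge> n + 1" using A1 B1 by auto
        then show "i \<in> {-1 - int s..<-1 - int s + (n+2)}" by auto
      qed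
      then show ?thesis by blast
    qed
  qed
qed

lemma walls_below:
  assumes p: "nz (per u)" and wq: "wall ((F^^t) (patch u x)) j"
  shows "j \<ge> - int t - 1"
proof (rule ccontr)
  assume "\<not> j \<ge> - int t - 1"
  then have j: "j < - int t - 1" by simp
  have ag1: "\<forall>j<0. per u j = patch u x j" using patch_out[of _ x u] by auto
  have A: "\<forall>j<0 - int t. (F^^t) (per u) j = (F^^t) (patch u x) j" by (rule lc_left[OF ag1])
  have "wall ((F^^t) (per u)) j" using wq A j unfolding wall_def by auto
  moreover have "nz ((F^^t) (per u))" using p by (rule nz_Ft)
  ultimately show False unfolding wall_def nz_def by blast
qed

lemma min_wall:
  assumes p: "nz (per u)" and wq: "wall ((F^^t) (patch u x)) j"
  shows "\<exists>j0\<le>j. wall ((F^^t) (patch u x)) j0 \<and> (\<forall>j'<j0. \<not> wall ((F^^t) (patch u x)) j')"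
proof -
  let ?z = "(F^^t) (patch u x)"
  define b where "b = - int t - 1"
  have jb: "j \<ge> b" using walls_below[OF p wq] unfolding b_def .
  define P where "P m \<longleftrightarrow> wall ?z (b + int m)" for m
  have Pj: "P (nat (j - b))" unfolding P_def using jb wq by simp
  define m0 where "m0 = (LEAST m. P m)"
  have Pm0: "P m0" unfolding m0_def by (rule LeastI[of P, OF Pj])
  have m0le: "m0 \<le> nat (j - b)" unfolding m0_def by (rule Least_le[of P, OF Pj])
  show ?thesis
  proof (intro exI conjI allI impI)
    show "b + int m0 \<le> j" using m0le jb by linarith
    show "wall ?z (b + int m0)" using Pm0 unfolding P_def .
    fix j' assume j': "j' < b + int m0"
    show "\<not> wall ?z j'"
    proof
      assume wj: "wall ?z j'"
      then have "j' \<ge> b" using walls_below[OF p] unfolding b_def by blast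
      then have "P (nat (j' - b))" unfolding P_def using wj by simp
      then have "m0 \<le> nat (j' - b)" unfolding m0_def by (rule Least_le[of P])
      then show False using j' \<open>j' \<ge> b\<close> by linarith
    qed
  qed
qed

lemma walls_go_left:
  assumes p: "nz (per u)" and w: "wall (patch u x) c"
  shows "\<exists>t j. j \<le> c - int k \<and> wall ((F^^t) (patch u x)) j"
proof (induction k)
  case 0 then show ?case using w by (intro exI[of _ 0] exI[of _ c]) simp
next
  case (Suc k)
  then obtain t j where j: "j \<le> c - int k" "wall ((F^^t) (patch u x)) j" by blast
  obtain j0 where j0: "j0 \<le> j" "wall ((F^^t) (patch u x)) j0"
    "\<forall>j'<j0. \<not> wall ((F^^t) (patch u x)) j'" using min_wall[OF p j(2)] by blast
  obtain j1 where j1: "j1 < j0" "wall ((F^^2) ((F^^t) (patch u x))) j1"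
    using wall_extend[OF j0(2) j0(3)] by blast
  have "(F^^2) ((F^^t) (patch u x)) = (F^^(2+t)) (patch u x)" by (simp add: funpow_add numeral_2_eq_2)
  then show ?case using j1 j0 j by (intro exI[of _ "2+t"] exI[of _ j1]) auto
qed

lemma caseB2:
  assumes p: "nz (per u)" and q: "\<not> nz (patch u x)"
  shows "\<not> SInv 172 u x"
proof
  assume "SInv 172 u x"
  then obtain w where W: "\<forall>t. \<exists>a. {i. (F ^^ t) (per u) i \<noteq> (F ^^ t) (patch u x) i} \<subseteq> {a..<a + w}"
    unfolding SInv_def by blast
  obtain c where c: "wall (patch u x) c" using q unfolding nz_def wall_def by blast
  obtain t j where j: "j \<le> c - int (nat w + 2)" "wall ((F^^t) (patch u x)) j"
    using walls_go_left[OF p c] by blast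
  obtain a where a: "{i. (F ^^ t) (per u) i \<noteq> (F ^^ t) (patch u x) i} \<subseteq> {a..<a + w}"
    using W by blast
  have nzt: "nz ((F^^t) (per u))" using p by (rule nz_Ft)
  have key: "a \<le> j' + 1 \<and> j' < a + w" if "wall ((F^^t) (patch u x)) j'" for j'
  proof -
    have "(F ^^ t) (per u) j' \<noteq> (F ^^ t) (patch u x) j' \<or>
          (F ^^ t) (per u) (j'+1) \<noteq> (F ^^ t) (patch u x) (j'+1)"
      using that nzt unfolding wall_def nz_def by blast
    then show ?thesis using a by auto
  qed
  have "a \<le> j + 1" using key[OF j(2)] by simp
  moreover have "c < a + w" using key[OF wall_Ft[OF c, of t]] by simp
  moreover have "int (nat w + 2) \<ge> w + 2" by simp
  ultimately show False using j(1) by linarith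
qed

lemma proto3:
  fixes g :: "bool list \<Rightarrow> bool" and a :: "bool list \<Rightarrow> bool \<times> bool"
  assumes H: "\<forall>x y. length x = i \<longrightarrow> length y = m - i \<longrightarrow> g (x @ y) = h (a x) y"
  shows "D_split g m i \<le> 3"
proof -
  define B where "B v = (Bob (h v) (Leaf True) (Leaf False) :: (bool list, bool list, bool) protocol)" for v
  define P where "P = Alice (\<lambda>x. fst (a x))
      (Alice (\<lambda>x. snd (a x)) (B (True,True)) (B (True,False)))
      (Alice (\<lambda>x. snd (a x)) (B (False,True)) (B (False,False)))"
  have run: "run P x y = h (a x) y" for x y
    unfolding P_def B_def by (cases "a x") auto
  have dp: "depth P = 3" unfolding P_def B_def by (simp add: numeral_3_eq_3)
  have "\<exists>P :: (bool list, bool list, bool) protocol. depth P = 3 \<and>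
      (\<forall>x y. length x = i \<longrightarrow> length y = m - i \<longrightarrow> run P x y = g (x @ y))"
    using run dp H by (intro exI[of _ P]) auto
  then show ?thesis unfolding D_split_def by (rule Least_le)
qed

definition Rr :: "bool list \<Rightarrow> nat \<Rightarrow> bool list \<Rightarrow> int \<Rightarrow> bool" where
  "Rr u i y j = (if int i \<le> j \<and> j < int i + int (length y) then y ! nat (j - int i) else per u j)"

lemma patch_app:
  assumes "length x = i"
  shows "patch u (x @ y) j = (if j < int i then patch u x j else Rr u i y j)"
proof (cases "j < int i")
  case True
  then show ?thesis using assms unfolding patch_def by (auto simp: nth_append)
next
  case False
  then have "nat j - i = nat (j - int i)" by auto
  then show ?thesis using assms False unfolding patch_def Rr_def by (auto simp: nth_append)
qed

lemma nz_app:
  assumes "length x = i"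
  shows "nz (patch u (x @ y)) \<longleftrightarrow>
    ((\<forall>j < int i - 1. patch u x j \<or> patch u x (j+1)) \<and> (patch u x (int i - 1) \<or> Rr u i y (int i)))
    \<and> (\<forall>j \<ge> int i. Rr u i y j \<or> Rr u i y (j+1))"
  unfolding nz_def patch_app[OF assms]
proof (intro iffI conjI allI impI)
  fix j
  assume H: "\<forall>j. (if j < int i then patch u x j else Rr u i y j) \<or>
             (if j + 1 < int i then patch u x (j + 1) else Rr u i y (j + 1))"
  { assume "j < int i - 1" then show "patch u x j \<or> patch u x (j+1)" using H[rule_format, of j] by auto }
  { assume "int i \<le> j" then show "Rr u i y j \<or> Rr u i y (j+1)" using H[rule_format, of j] by auto }
next
  assume H: "\<forall>j. (if j < int i then patch u x j else Rr u i y j) \<or>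
             (if j + 1 < int i then patch u x (j + 1) else Rr u i y (j + 1))"
  show "patch u x (int i - 1) \<or> Rr u i y (int i)" using H[rule_format, of "int i - 1"] by auto
next
  fix j
  assume H: "((\<forall>j < int i - 1. patch u x j \<or> patch u x (j+1)) \<and> (patch u x (int i - 1) \<or> Rr u i y (int i)))
    \<and> (\<forall>j \<ge> int i. Rr u i y j \<or> Rr u i y (j+1))"
  show "(if j < int i then patch u x j else Rr u i y j) \<or>
         (if j + 1 < int i then patch u x (j + 1) else Rr u i y (j + 1))"
  proof (cases "j < int i - 1")
    case True then show ?thesis using H by auto
  next
    case False
    show ?thesis
    proof (cases "j = int i - 1")
      case True then show ?thesis using H by auto
    next
      case False
      then have "j \<ge> int i" using \<open>\<not> j < int i - 1\<close> by simp
      then show ?thesis using H by auto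
    qed
  qed
qed

theorem mainTheorem9:
  fixes u :: "bool list"
  assumes "u \<noteq> []"
  shows "\<exists>C::nat. \<forall>n. D_cc (SInv 172 u) n \<le> C"
proof (intro exI allI)
  fix m
  have each: "D_split (SInv 172 u) m i \<le> 3" for i
  proof (cases "\<exists>c. wall (per u) c")
    case True
    then obtain c where "wall (per u) c" by blast
    then have "SInv 172 u w" for w using caseA[OF assms] by blast
    then show ?thesis by (intro proto3[where h = "\<lambda>_ _. True" and a = "\<lambda>_. (True, True)"]) auto
  next
    case False
    then have p: "nz (per u)" unfolding nz_def wall_def by blast
    have eq: "SInv 172 u w \<longleftrightarrow> nz (patch u w)" for w using caseB1[OF p] caseB2[OF p] by blast
    show ?thesis
      apply (rule proto3[where a = "\<lambda>x. ((\<forall>j < int i - 1. patch u x j \<or> patch u x (j+1)), patch u x (int i - 1))"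
          and h = "\<lambda>(b1, b2) y. (b1 \<and> (b2 \<or> Rr u i y (int i))) \<and> (\<forall>j \<ge> int i. Rr u i y j \<or> Rr u i y (j+1))"])
      using eq nz_app by simp
  qed
  show "D_cc (SInv 172 u) m \<le> 3"
    unfolding D_cc_def using each by (subst Max_le_iff) auto
qed
end
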